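(* Let $X,Y$ be complex Banach spaces, $U:X\to Y$ a bounded linear operator with $\|U\|\le\lambda$, $\lambda\ge1$, $1\le p<\infty$, and $Z=(\mathbb C^n,\|\cdot\|)$ a Banach space whose canonical basis is normalized $1$-unconditional. Then $$A_\lambda(B_Z,p,U)\ge\frac{\|Id:Z\to\ell_1^n\|}{n}K_\lambda(B_Z,p,U).$$
   Context: For a complete Reinhardt domain $\Omega\subset\mathbb C^n$ and a bounded holomorphic $f:\Omega\to X$, $f(z)=\sum_\alpha a_\alpha z^\alpha$, $\|f\|_{\Omega,X}=\sup_\Omega\|f(z)\|_X$. $K_\lambda(\Omega,p,U)$ is the supremum of all $r\ge0$ such that $\sup_{z\in r\Omega}\sum_\alpha\|U(a_\alpha)z^\alpha\|_Y^p\le\lambda^p\|f\|_{\Omega,X}^p$ for all bounded holomorphic $f:\Omega\to X$. $A_\lambda(\Omega,p,U)$ is the supremum of $\frac1n\sum_{i=1}^nr_i$ over $r\in\mathbb R^n_{\ge0}$ such that $\sum_\alpha\|U(a_\alpha)\|_Y^pr^{p\alpha}\le\lambda^p\|f\|_{\Omega,X}^p$ for all bounded holomorphic $f:\Omega\to X$. $B_Z$ is the open unit ball of $Z$. *)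

theory Defs
  imports "HOL-Analysis.Analysis"
begin

text \<open>HOL-Analysis only has real normed spaces.  A complex Banach space is a real
Banach space with a compatible complex scalar multiplication.\<close>

class complex_banach = banach +
  fixes scaleC :: "complex \<Rightarrow> 'a \<Rightarrow> 'a"  (infixr \<open>*\<^sub>C\<close> 75)
  assumes scaleC_of_real: "scaleC (complex_of_real r) x = r *\<^sub>R x"
    and scaleC_add_right: "scaleC c (x + y) = scaleC c x + scaleC c y"
    and scaleC_add_left: "scaleC (c + d) x = scaleC c x + scaleC d x"
    and scaleC_scaleC: "scaleC c (scaleC d x) = scaleC (c * d) x"
    and norm_scaleC: "norm (scaleC c x) = cmod c * norm x"

definition complex_bounded_linear :: "('a::complex_banach \<Rightarrow> 'b::complex_banach) \<Rightarrow> bool" where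
  "complex_bounded_linear U \<longleftrightarrow> bounded_linear U \<and> (\<forall>c x. U (c *\<^sub>C x) = c *\<^sub>C U x)"

definition is_norm_on_Cn :: "(complex ^ 'n \<Rightarrow> real) \<Rightarrow> bool" where
  "is_norm_on_Cn N \<longleftrightarrow>
     (\<forall>x. N x = 0 \<longleftrightarrow> x = 0) \<and>
     (\<forall>c x. N (c *s x) = cmod c * N x) \<and>
     (\<forall>x y. N (x + y) \<le> N x + N y)"

definition normalized_1_unconditional :: "(complex ^ 'n \<Rightarrow> real) \<Rightarrow> bool" where
  "normalized_1_unconditional N \<longleftrightarrow>
     (\<forall>i. N (axis i 1) = 1) \<and>
     (\<forall>\<theta> z. (\<forall>i. cmod (\<theta> $ i) = 1) \<longrightarrow> N (\<chi> i. \<theta> $ i * z $ i) \<le> N z)"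

definition open_unit_ball :: "(complex ^ 'n \<Rightarrow> real) \<Rightarrow> (complex ^ 'n) set" where
  "open_unit_ball N = {z. N z < 1}"

definition id_to_l1_norm :: "(complex ^ 'n \<Rightarrow> real) \<Rightarrow> real" where
  "id_to_l1_norm N = Sup ((\<lambda>z. \<Sum>i\<in>UNIV. cmod (z $ i)) ` {z. N z \<le> 1})"

definition monom :: "complex ^ 'n \<Rightarrow> ('n \<Rightarrow> nat) \<Rightarrow> complex" where
  "monom z \<alpha> = (\<Prod>i\<in>UNIV. (z $ i) ^ \<alpha> i)"

definition holo_on :: "(complex ^ 'n \<Rightarrow> 'x::complex_banach) \<Rightarrow> (complex ^ 'n) set \<Rightarrow> bool" where
  "holo_on f \<Omega> \<longleftrightarrow>
     (\<forall>z\<in>\<Omega>. \<exists>D. (f has_derivative D) (at z) \<and> (\<forall>c v. D (c *s v) = c *\<^sub>C D v))"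

definition bounded_holo_coeffs ::
  "(complex ^ 'n \<Rightarrow> 'x::complex_banach) \<Rightarrow> (('n \<Rightarrow> nat) \<Rightarrow> 'x) \<Rightarrow> (complex ^ 'n) set \<Rightarrow> bool" where
  "bounded_holo_coeffs f a \<Omega> \<longleftrightarrow>
     holo_on f \<Omega> \<and> bounded (f ` \<Omega>) \<and>
     (\<forall>z\<in>\<Omega>. ((\<lambda>\<alpha>. monom z \<alpha> *\<^sub>C a \<alpha>) has_sum f z) UNIV)"

definition sup_norm :: "(complex ^ 'n \<Rightarrow> 'x::complex_banach) \<Rightarrow> (complex ^ 'n) set \<Rightarrow> real" where
  "sup_norm f \<Omega> = (SUP z\<in>\<Omega>. norm (f z))"

definition K_const :: "real \<Rightarrow> (complex ^ 'n) set \<Rightarrow> real \<Rightarrow> ('x::complex_banach \<Rightarrow> 'y::complex_banach) \<Rightarrow> ereal" where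
  "K_const lam \<Omega> p U = Sup (ereal ` {r. r \<ge> 0 \<and>
     (\<forall>(f :: complex ^ 'n \<Rightarrow> 'x) a. bounded_holo_coeffs f a \<Omega> \<longrightarrow>
        (\<forall>z\<in>(\<lambda>w. r *\<^sub>R w) ` \<Omega>.
           (\<lambda>\<alpha>. norm (monom z \<alpha> *\<^sub>C U (a \<alpha>)) powr p) summable_on UNIV \<and>
           (\<Sum>\<^sub>\<infinity>\<alpha>. norm (monom z \<alpha> *\<^sub>C U (a \<alpha>)) powr p) \<le> lam powr p * sup_norm f \<Omega> powr p))})"

definition A_const :: "real \<Rightarrow> (complex ^ 'n) set \<Rightarrow> real \<Rightarrow> ('x::complex_banach \<Rightarrow> 'y::complex_banach) \<Rightarrow> ereal" where
  "A_const lam \<Omega> p U = Sup (ereal ` {(\<Sum>i\<in>UNIV. r i) / real CARD('n) | r :: 'n \<Rightarrow> real. (\<forall>i. r i \<ge> 0) \<and>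
     (\<forall>(f :: complex ^ 'n \<Rightarrow> 'x) a. bounded_holo_coeffs f a \<Omega> \<longrightarrow>
        (\<lambda>\<alpha>. norm (U (a \<alpha>)) powr p * (\<Prod>i\<in>UNIV. r i ^ \<alpha> i) powr p) summable_on UNIV \<and>
        (\<Sum>\<^sub>\<infinity>\<alpha>. norm (U (a \<alpha>)) powr p * (\<Prod>i\<in>UNIV. r i ^ \<alpha> i) powr p) \<le> lam powr p * sup_norm f \<Omega> powr p)})"

end

theory Submission
  imports Defs
begin

lemma coord_le:
  fixes N :: "complex ^ 'n \<Rightarrow> real"
  assumes n: "is_norm_on_Cn N" and u: "normalized_1_unconditional N"
  shows "cmod (z $ i) \<le> N z"
proof -
  define \<theta> :: "complex ^ 'n" where "\<theta> = (\<chi> j. if j = i then 1 else -1)"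
  define w where "w = (\<chi> j. \<theta> $ j * z $ j)"
  have t1: "\<forall>j. cmod (\<theta> $ j) = 1" by (simp add: \<theta>_def)
  have Nw: "N w \<le> N z" using u t1 unfolding normalized_1_unconditional_def w_def by blast
  have "z + w = (2 * z $ i) *s axis i 1"
    by (simp add: w_def \<theta>_def vec_eq_iff axis_def)
  hence "N (z + w) = cmod (2 * z $ i)" using n u unfolding is_norm_on_Cn_def normalized_1_unconditional_def by simp
  moreover have "N (z + w) \<le> N z + N w" using n unfolding is_norm_on_Cn_def by blast
  ultimately show ?thesis using Nw by (simp add: norm_mult)
qed

lemma l1_bdd:
  fixes N :: "complex ^ 'n \<Rightarrow> real"
  assumes n: "is_norm_on_Cn N" and u: "normalized_1_unconditional N"
  shows "bdd_above ((\<lambda>z. \<Sum>i\<in>UNIV. cmod (z $ i)) ` {z. N z \<le> 1})"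
proof (rule bdd_aboveI2)
  fix z assume "z \<in> {z. N z \<le> 1}"
  hence "\<And>i. cmod (z $ i) \<le> 1" using coord_le[OF n u] by (meson mem_Collect_eq order_trans)
  thus "(\<Sum>i\<in>UNIV. cmod (z $ i)) \<le> real CARD('n)"
    using sum_mono[of UNIV "\<lambda>i. cmod (z $ i)" "\<lambda>_. 1"] by simp
qed

lemma l1_ge1:
  fixes N :: "complex ^ 'n \<Rightarrow> real"
  assumes n: "is_norm_on_Cn N" and u: "normalized_1_unconditional N"
  shows "id_to_l1_norm N \<ge> 1"
proof -
  obtain i :: 'n where True by simp
  have "N (axis i 1) \<le> 1" using u unfolding normalized_1_unconditional_def by simp
  moreover have "(\<Sum>j\<in>UNIV. cmod (axis i (1::complex) $ j)) = 1"
  proof -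
    have h: "(\<lambda>j. cmod (axis i (1::complex) $ j)) = (\<lambda>j. if j = i then 1 else 0)"
      by (auto simp: axis_def)
    show ?thesis unfolding h by simp
  qed
  ultimately have "1 \<in> (\<lambda>z. \<Sum>i\<in>UNIV. cmod (z $ i)) ` {z. N z \<le> 1}"
    by (intro rev_image_eqI[of "axis i 1"]) auto
  thus ?thesis unfolding id_to_l1_norm_def by (rule cSup_upper[OF _ l1_bdd[OF n u]])
qed


lemma monom_scale_norm:
  fixes z :: "complex ^ 'n"
  assumes "r \<ge> 0"
  shows "cmod (monom (r *\<^sub>R z) \<alpha>) = (\<Prod>i\<in>UNIV. (r * cmod (z $ i)) ^ \<alpha> i)"
  using assms by (simp add: monom_def prod_norm[symmetric] norm_power norm_mult power_mult_distrib vector_scaleR_component)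

theorem mainTheorem17:
  fixes U :: "'x::complex_banach \<Rightarrow> 'y::complex_banach"
    and N :: "complex ^ 'n \<Rightarrow> real"
    and lam p :: real
  assumes "complex_bounded_linear U"
    and "onorm U \<le> lam"
    and "lam \<ge> 1"
    and "1 \<le> p"
    and n: "is_norm_on_Cn N"
    and u: "normalized_1_unconditional N"
  shows "A_const lam (open_unit_ball N) p U
           \<ge> ereal (id_to_l1_norm N / real CARD('n)) * K_const lam (open_unit_ball N) p U"
proof -
  define \<Omega> where "\<Omega> = open_unit_ball N"
  define R where "R = {r. r \<ge> 0 \<and>
     (\<forall>(f :: complex ^ 'n \<Rightarrow> 'x) a. bounded_holo_coeffs f a \<Omega> \<longrightarrow>
        (\<forall>z\<in>(\<lambda>w. r *\<^sub>R w) ` \<Omega>.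
           (\<lambda>\<alpha>. norm (monom z \<alpha> *\<^sub>C U (a \<alpha>)) powr p) summable_on UNIV \<and>
           (\<Sum>\<^sub>\<infinity>\<alpha>. norm (monom z \<alpha> *\<^sub>C U (a \<alpha>)) powr p) \<le> lam powr p * sup_norm f \<Omega> powr p))}"
  define AS where "AS = {(\<Sum>i\<in>UNIV. r i) / real CARD('n) | r :: 'n \<Rightarrow> real. (\<forall>i. r i \<ge> 0) \<and>
     (\<forall>(f :: complex ^ 'n \<Rightarrow> 'x) a. bounded_holo_coeffs f a \<Omega> \<longrightarrow>
        (\<lambda>\<alpha>. norm (U (a \<alpha>)) powr p * (\<Prod>i\<in>UNIV. r i ^ \<alpha> i) powr p) summable_on UNIV \<and>
        (\<Sum>\<^sub>\<infinity>\<alpha>. norm (U (a \<alpha>)) powr p * (\<Prod>i\<in>UNIV. r i ^ \<alpha> i) powr p) \<le> lam powr p * sup_norm f \<Omega> powr p)}"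
  define A where "A = A_const lam (open_unit_ball N) p U"
  have KR: "K_const lam (open_unit_ball N) p U = Sup (ereal ` R)"
    unfolding K_const_def R_def \<Omega>_def ..
  have AA: "A = Sup (ereal ` AS)"
    unfolding A_def A_const_def AS_def \<Omega>_def ..
  define S where "S = id_to_l1_norm N"
  have S1: "S \<ge> 1" unfolding S_def by (rule l1_ge1[OF n u])
  have key: "ereal (r * (\<Sum>i\<in>UNIV. cmod (z $ i)) / real CARD('n)) \<le> A"
    if rR: "r \<in> R" and z: "N z < 1" for r z
  proof -
    define \<rho> where "\<rho> = (\<lambda>i. r * cmod (z $ i))"
    have r0: "r \<ge> 0" using rR unfolding R_def by simp
    have zO: "z \<in> \<Omega>" using z unfolding \<Omega>_def open_unit_ball_def by simp
    have teq: "norm (monom (r *\<^sub>R z) \<alpha> *\<^sub>C U (a \<alpha>)) powr p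
        = norm (U (a \<alpha>)) powr p * (\<Prod>i\<in>UNIV. \<rho> i ^ \<alpha> i) powr p" for a :: "('n \<Rightarrow> nat) \<Rightarrow> 'x" and \<alpha>
    proof -
      have "norm (monom (r *\<^sub>R z) \<alpha> *\<^sub>C U (a \<alpha>)) = (\<Prod>i\<in>UNIV. \<rho> i ^ \<alpha> i) * norm (U (a \<alpha>))"
        by (simp add: norm_scaleC monom_scale_norm[OF r0] \<rho>_def)
      moreover have "(\<Prod>i\<in>UNIV. \<rho> i ^ \<alpha> i) \<ge> 0" unfolding \<rho>_def using r0
        by (intro prod_nonneg) simp
      ultimately show ?thesis by (simp add: powr_mult mult.commute)
    qed
    have "(\<Sum>i\<in>UNIV. \<rho> i) / real CARD('n) \<in> AS"
      unfolding AS_def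
    proof (intro CollectI exI conjI allI impI)
      show "(\<Sum>i\<in>UNIV. \<rho> i) / real CARD('n) = (\<Sum>i\<in>UNIV. \<rho> i) / real CARD('n)" ..
      show "\<rho> i \<ge> 0" for i unfolding \<rho>_def using r0 by simp
      fix f :: "complex ^ 'n \<Rightarrow> 'x" and a
      assume bh: "bounded_holo_coeffs f a \<Omega>"
      have pt: "r *\<^sub>R z \<in> (\<lambda>w. r *\<^sub>R w) ` \<Omega>" using zO by blast
      have H: "(\<lambda>\<alpha>. norm (monom (r *\<^sub>R z) \<alpha> *\<^sub>C U (a \<alpha>)) powr p) summable_on UNIV \<and>
           (\<Sum>\<^sub>\<infinity>\<alpha>. norm (monom (r *\<^sub>R z) \<alpha> *\<^sub>C U (a \<alpha>)) powr p) \<le> lam powr p * sup_norm f \<Omega> powr p"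
      proof -
        have "\<forall>(f :: complex ^ 'n \<Rightarrow> 'x) a. bounded_holo_coeffs f a \<Omega> \<longrightarrow>
        (\<forall>z\<in>(\<lambda>w. r *\<^sub>R w) ` \<Omega>.
           (\<lambda>\<alpha>. norm (monom z \<alpha> *\<^sub>C U (a \<alpha>)) powr p) summable_on UNIV \<and>
           (\<Sum>\<^sub>\<infinity>\<alpha>. norm (monom z \<alpha> *\<^sub>C U (a \<alpha>)) powr p) \<le> lam powr p * sup_norm f \<Omega> powr p)"
          using rR unfolding R_def mem_Collect_eq by (rule conjunct2)
        from bspec[OF mp[OF spec[OF spec[OF this, of f], of a] bh] pt] show ?thesis .
      qed
      show "(\<lambda>\<alpha>. norm (U (a \<alpha>)) powr p * (\<Prod>i\<in>UNIV. \<rho> i ^ \<alpha> i) powr p) summable_on UNIV"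
        using H by (simp only: teq)
      show "(\<Sum>\<^sub>\<infinity>\<alpha>. norm (U (a \<alpha>)) powr p * (\<Prod>i\<in>UNIV. \<rho> i ^ \<alpha> i) powr p) \<le> lam powr p * sup_norm f \<Omega> powr p"
        using H by (simp only: teq)
    qed
    hence "ereal ((\<Sum>i\<in>UNIV. \<rho> i) / real CARD('n)) \<le> A"
      unfolding AA by (rule Sup_upper[OF imageI])
    moreover have "(\<Sum>i\<in>UNIV. \<rho> i) = r * (\<Sum>i\<in>UNIV. cmod (z $ i))"
      unfolding \<rho>_def by (simp add: sum_distrib_left)
    ultimately show ?thesis by simp
  qed
  have step: "ereal (S / real CARD('n) * r) \<le> A" if rR: "r \<in> R" for r
  proof -
    have r0: "r \<ge> 0" using rR unfolding R_def by simp
    have N0: "N 0 = 0" using n unfolding is_norm_on_Cn_def by simp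
    have A0: "ereal 0 \<le> A" using key[OF rR, of 0] N0 by simp
    show ?thesis
    proof (cases A)
      case (real a)
      have lt: "r * (\<Sum>i\<in>UNIV. cmod (z $ i)) / real CARD('n) \<le> a" if "N z < 1" for z
        using key[OF rR that] real by simp
      have le: "r * (\<Sum>i\<in>UNIV. cmod (z $ i)) / real CARD('n) \<le> a" if zl: "N z \<le> 1" for z
      proof (rule field_le_mult_one_interval)
        fix t :: real assume t: "0 < t" "t < 1"
        define z' where "z' = complex_of_real t *s z"
        have "N z' = t * N z" using n t unfolding is_norm_on_Cn_def z'_def by simp
        also have "\<dots> < 1" using t zl mult_left_mono[of "N z" 1 t] by linarith
        finally have "r * (\<Sum>i\<in>UNIV. cmod (z' $ i)) / real CARD('n) \<le> a" by (rule lt)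
        moreover have "(\<Sum>i\<in>UNIV. cmod (z' $ i)) = t * (\<Sum>i\<in>UNIV. cmod (z $ i))"
          unfolding z'_def using t by (simp add: norm_mult sum_distrib_left)
        ultimately show "t * (r * (\<Sum>i\<in>UNIV. cmod (z $ i)) / real CARD('n)) \<le> a"
          by (simp add: algebra_simps)
      qed
      show ?thesis
      proof (cases "r = 0")
        case True then show ?thesis using A0 by simp
      next
        case False
        hence rp: "r > 0" using r0 by simp
        have "S \<le> a * real CARD('n) / r"
          unfolding S_def id_to_l1_norm_def
        proof (rule cSup_least)
          have "(0::complex^'n) \<in> {z. N z \<le> 1}" using N0 by simp
          hence "{z. N z \<le> 1} \<noteq> {}" by auto
          thus "(\<lambda>z. \<Sum>i\<in>UNIV. cmod (z $ i)) ` {z. N z \<le> 1} \<noteq> {}" by simp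
          fix x assume "x \<in> (\<lambda>z. \<Sum>i\<in>UNIV. cmod (z $ i)) ` {z. N z \<le> 1}"
          then obtain z where zl: "N z \<le> 1" and x: "x = (\<Sum>i\<in>UNIV. cmod (z $ i))" by auto
          have "r * x / real CARD('n) \<le> a" using le[OF zl] x by simp
          thus "x \<le> a * real CARD('n) / r" using rp
            by (simp add: field_simps)
        qed
        hence "S / real CARD('n) * r \<le> a" using rp
          by (simp add: field_simps)
        thus ?thesis using real by simp
      qed
    next
      case PInf then show ?thesis by simp
    next
      case MInf then show ?thesis using A0 by simp
    qed
  qed
  have cpos: "S / real CARD('n) > 0" using S1 by simp
  show ?thesis
  proof (cases "R = {}")
    case True
    then show ?thesis unfolding KR using cpos S1 by (simp add: S_def bot_ereal_def)
  next
    case False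
    have "ereal (S / real CARD('n)) * Sup (ereal ` R) = (SUP r\<in>R. ereal (S / real CARD('n)) * ereal r)"
      using Sup_ereal_mult_left'[OF False, of "S / real CARD('n)" ereal] cpos by simp
    also have "\<dots> \<le> A" using step by (intro SUP_least) simp
    finally show ?thesis unfolding KR A_def S_def .
  qed
qed

end
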